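(* Let $j\ge0$ be an integer and $\beta$ a real number, and for $x\in\mathbb R^d$, $t\neq0$, put $r=\|x\|$ and $$H_j^{(\beta)}(x,t)=(t^2-\|x\|^2)\,t^{2j}\,P_j^{(1,\beta)}\!\left(2\frac{r^2}{t^2}-1\right).$$ Then $$\frac{\partial}{\partial t}H_j^{(\beta)}(x,t)=2(j+1)\,t^{2j+1}P_j^{(0,\beta)}\!\left(2\frac{r^2}{t^2}-1\right),$$ $$\frac{\partial^2}{\partial t^2}H_j^{(\beta)}(x,t)=2(j+1)(4j+2\beta+3)\,t^{2j}P_j^{(0,\beta)}\!\left(2\frac{r^2}{t^2}-1\right)-4(j+1)(j+\beta+1)\,t^{2j}P_j^{(1,\beta)}\!\left(2\frac{r^2}{t^2}-1\right).$$
   Context: $P_n^{(\alpha,\beta)}$ denotes the Jacobi polynomial $P_n^{(\alpha,\beta)}(s)=\sum_{k=0}^n \frac{(\alpha+k+1)_{n-k}(n+\alpha+\beta+1)_k}{k!\,(n-k)!}\left(\frac{s-1}{2}\right)^k$, with $(a)_k$ the Pochhammer symbol. *)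

theory Defs
  imports "HOL-Analysis.Analysis"
begin

definition jacobiP :: "nat \<Rightarrow> real \<Rightarrow> real \<Rightarrow> real \<Rightarrow> real" where
  "jacobiP n \<alpha> \<beta> s =
     (\<Sum>k=0..n. pochhammer (\<alpha> + real k + 1) (n - k) * pochhammer (real n + \<alpha> + \<beta> + 1) k
                / (fact k * fact (n - k)) * ((s - 1) / 2) ^ k)"

definition H :: "nat \<Rightarrow> real \<Rightarrow> 'a::euclidean_space \<Rightarrow> real \<Rightarrow> real" where
  "H j \<beta> x t = (t^2 - (norm x)^2) * t^(2*j) * jacobiP j 1 \<beta> (2 * (norm x)^2 / t^2 - 1)"

end

theory Submission
  imports Defs
begin

definition cf :: "nat \<Rightarrow> real \<Rightarrow> real \<Rightarrow> nat \<Rightarrow> real" where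
 "cf j \<alpha> \<beta> k = pochhammer (\<alpha> + real k + 1) (j - k) * pochhammer (real j + \<alpha> + \<beta> + 1) k / (fact k * fact (j - k))"

lemma poch_fact: "k \<le> n \<Longrightarrow> pochhammer (real k + 1) (n - k) = fact n / fact k"
proof -
  assume "k \<le> n"
  then have "fact n = (pochhammer 1 (k + (n - k)) :: real)" by (simp add: pochhammer_fact)
  also have "\<dots> = fact k * pochhammer (real k + 1) (n - k)"
    by (simp add: pochhammer_product' pochhammer_fact add.commute)
  finally show ?thesis by (simp add: field_simps)
qed

lemma cf1: "k \<le> j \<Longrightarrow> cf j 1 \<beta> k = fact (j+1) / fact (k+1) * pochhammer (real j + \<beta> + 2) k / (fact k * fact (j - k))"
  using poch_fact[of "k+1" "j+1"] unfolding cf_def by (simp add: add_ac)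
lemma cf0: "k \<le> j \<Longrightarrow> cf j 0 \<beta> k = fact j / fact k * pochhammer (real j + \<beta> + 1) k / (fact k * fact (j - k))"
  using poch_fact[of "k" "j"] unfolding cf_def by (simp add: add_ac)

lemma coefB0: "cf j 1 \<beta> 0 = (real j + 1) * cf j 0 \<beta> 0"
  by (simp add: cf1 cf0)

lemma coefB: assumes "i < j"
  shows "real (Suc i + 1) * cf j 1 \<beta> (Suc i) - real (j - i) * cf j 1 \<beta> i = (real j + 1) * cf j 0 \<beta> (Suc i)"
proof -
  define X where "X = pochhammer (real j + \<beta> + 2) i"
  have p1: "pochhammer (real j + \<beta> + 2) (Suc i) = X * (real j + \<beta> + 2 + i)"
    by (simp add: X_def pochhammer_Suc)
  have p0: "pochhammer (real j + \<beta> + 1) (Suc i) = (real j + \<beta> + 1) * X"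
    by (simp add: X_def pochhammer_rec add_ac)
  have f: "fact (j - i) = real (j - i) * fact (j - Suc i)"
    using assms by (metis Suc_diff_Suc fact_Suc of_nat_fact)
  have ji: "real (j - i) = real j - real i" using assms by simp
  have a1: "cf j 1 \<beta> (Suc i) = (real j + 1) * fact j / ((real i + 2) * (real i + 1) * fact i) * (X * (real j + \<beta> + 2 + i)) / ((real i + 1) * fact i * fact (j - Suc i))"
    using assms by (simp add: cf1 p1 del: fact_Suc) (simp add: fact_Suc algebra_simps)
  have a2: "cf j 1 \<beta> i = (real j + 1) * fact j / ((real i + 1) * fact i) * X / (fact i * (real j - real i) * fact (j - Suc i))"
    using assms by (simp add: cf1 f ji X_def del: fact_Suc) (simp add: fact_Suc algebra_simps)
  have a3: "cf j 0 \<beta> (Suc i) = fact j / ((real i + 1) * fact i) * ((real j + \<beta> + 1) * X) / ((real i + 1) * fact i * fact (j - Suc i))"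
    using assms by (simp add: cf0 p0 del: fact_Suc) (simp add: fact_Suc algebra_simps)
  have ne: "real j - real i \<noteq> 0" using assms by simp
  have nz: "(fact i::real) \<noteq> 0" "(fact (j - Suc i)::real) \<noteq> 0" "real i + 1 \<noteq> 0" "real i + 2 \<noteq> 0" by auto
  show ?thesis unfolding a1 a2 a3 ji using ne nz
    by (simp add: divide_simps) (simp add: algebra_simps)
qed

lemma pochB: "(b::real) * pochhammer (b + 1) i = pochhammer b i * (b + real i)"
  by (metis pochhammer_rec pochhammer_Suc)

lemma coefDj: "cf j 0 \<beta> j = (2 * (real j + \<beta> + 1) + 2 * real j + 1) * cf j 0 \<beta> j - 2 * (real j + \<beta> + 1) * cf j 1 \<beta> j"
proof -
  have e: "(real j + \<beta> + 1) * pochhammer (real j + \<beta> + 2) j = pochhammer (real j + \<beta> + 1) j * (real j + \<beta> + 1 + real j)"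
    using pochB[of "real j + \<beta> + 1" j] by (simp add: add_ac)
  have "(real j + \<beta> + 1) * cf j 1 \<beta> j = (real j + \<beta> + 1 + real j) * cf j 0 \<beta> j"
    proof -
    have c1: "cf j 1 \<beta> j = pochhammer (real j + \<beta> + 2) j / fact j" by (simp add: cf1 del: fact_Suc)
    have c0: "cf j 0 \<beta> j = pochhammer (real j + \<beta> + 1) j / fact j" by (simp add: cf0)
    show ?thesis unfolding c1 c0 times_divide_eq_right e by simp
  qed
  then show ?thesis by (simp add: algebra_simps)
qed

lemma coefD: assumes "i < j"
  shows "cf j 0 \<beta> i + 2 * (real j - real i) * cf j 0 \<beta> i - 2 * (real i + 1) * cf j 0 \<beta> (Suc i)
     = (2 * (real j + \<beta> + 1) + 2 * real j + 1) * cf j 0 \<beta> i - 2 * (real j + \<beta> + 1) * cf j 1 \<beta> i"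
proof -
  define Y where "Y = pochhammer (real j + \<beta> + 1) i"
  define B where "B = real j + \<beta> + 1"
  have e: "B * pochhammer (real j + \<beta> + 2) i = Y * (B + real i)"
    using pochB[of "real j + \<beta> + 1" i] by (simp add: add_ac Y_def B_def)
  have f: "fact (j - i) = real (j - i) * fact (j - Suc i)"
    using assms by (metis Suc_diff_Suc fact_Suc)
  have ji: "real (j - i) = real j - real i" using assms by simp
  have a1: "B * cf j 1 \<beta> i = (real j + 1) * fact j / ((real i + 1) * fact i) * (Y * (B + real i)) / (fact i * (real j - real i) * fact (j - Suc i))"
    proof -
    have c: "cf j 1 \<beta> i = (real j + 1) * fact j / ((real i + 1) * fact i) * pochhammer (real j + \<beta> + 2) i / (fact i * (real j - real i) * fact (j - Suc i))"
      using assms by (simp add: cf1 f ji del: fact_Suc) (simp add: fact_Suc algebra_simps)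
    show ?thesis unfolding c e[symmetric] by simp
  qed
  have a2: "cf j 0 \<beta> i = fact j / fact i * Y / (fact i * (real j - real i) * fact (j - Suc i))"
    using assms by (simp add: cf0 f ji Y_def del: fact_Suc)
  have a3: "cf j 0 \<beta> (Suc i) = fact j / ((real i + 1) * fact i) * (Y * (B + real i)) / ((real i + 1) * fact i * fact (j - Suc i))"
    proof -
    have p: "pochhammer (real j + \<beta> + 1) (Suc i) = Y*(B+real i)" by (simp add: Y_def B_def pochhammer_Suc)
    show ?thesis using assms by (simp add: cf0 p del: fact_Suc) (simp add: fact_Suc algebra_simps)
  qed
  have ne: "real j - real i \<noteq> 0" using assms by simp
  have nz: "(fact i::real) \<noteq> 0" "(fact (j - Suc i)::real) \<noteq> 0" "real i + 1 \<noteq> 0" by auto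
  have "cf j 0 \<beta> i + 2 * (real j - real i) * cf j 0 \<beta> i - 2 * (real i + 1) * cf j 0 \<beta> (Suc i)
     = (2 * B + 2 * real j + 1) * cf j 0 \<beta> i - 2 * (B * cf j 1 \<beta> i)"
    unfolding a1 a2 a3 using ne nz
    by (simp add: divide_simps) (simp add: algebra_simps)
  then show ?thesis by (simp add: B_def algebra_simps)
qed

definition Q :: "nat \<Rightarrow> real \<Rightarrow> real \<Rightarrow> real \<Rightarrow> real \<Rightarrow> real" where
  "Q j \<alpha> \<beta> u v = (\<Sum>k=0..j. cf j \<alpha> \<beta> k * u^k * v^(j-k))"

lemma jacobi_Q:
  assumes "s \<noteq> 0"
  shows "s^(2*j) * jacobiP j \<alpha> \<beta> (2*a/s^2 - 1) = Q j \<alpha> \<beta> (a - s^2) (s^2)"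
  unfolding jacobiP_def Q_def sum_distrib_left
proof (rule sum.cong[OF refl])
  fix k assume "k \<in> {0..j}"
  then have kj: "k \<le> j" by simp
  have e1: "(2*a/s^2 - 1 - 1) / 2 = (a - s^2) / s^2" using assms by (simp add: field_simps)
  have e2: "s^(2*j) = (s^2)^k * (s^2)^(j-k)"
  proof -
    have "2*j = 2*k + 2*(j-k)" using kj by simp
    then have "s^(2*j) = s^(2*k + 2*(j-k))" by simp
    also have "\<dots> = (s^2)^k * (s^2)^(j-k)" by (simp add: power_add power_mult)
    finally show ?thesis .
  qed
  have nz: "(s^2)^k \<noteq> 0" using assms by simp
  show "s^(2*j) * (pochhammer (\<alpha> + real k + 1) (j - k) * pochhammer (real j + \<alpha> + \<beta> + 1) k / (fact k * fact (j - k)) * ((2*a/s^2 - 1 - 1) / 2) ^ k)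
      = cf j \<alpha> \<beta> k * (a - s^2)^k * (s^2)^(j-k)"
    unfolding e1 e2 cf_def power_divide using nz assms by (simp add: field_simps)
qed

lemma DT: "((\<lambda>s. (a - s^2)^n * (s^2)^m) has_real_derivative
   (2 * s * (real m*(a-s^2)^n*(s^2)^(m-1) - real n*(a-s^2)^(n-1)*(s^2)^m))) (at s)"
  by (rule derivative_eq_intros refl | simp)+ (simp add: algebra_simps)

lemma DQ: "((\<lambda>s. Q j \<alpha> \<beta> (a - s^2) (s^2)) has_real_derivative
   (2 * s * (\<Sum>k=0..j. cf j \<alpha> \<beta> k*(real(j-k)*(a-s^2)^k*(s^2)^(j-k-1) - real k*(a-s^2)^(k-1)*(s^2)^(j-k))))) (at s)"
  unfolding Q_def mult.assoc
  apply (rule DERIV_cong[OF DERIV_sum])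
   apply (rule DERIV_cong[OF DERIV_cmult[OF DT]])
   apply (simp add: mult.assoc)
  apply (simp add: sum_distrib_left algebra_simps)
  done


lemma LB: "Q j 1 \<beta> u v - u  *  (\<Sum>k=0..j. cf j 1 \<beta> k * (real(j-k) * u^k * v^(j-k-1) - real k * u^(k-1) * v^(j-k)))
   = (real j + 1)  *  Q j 0 \<beta> u v"
proof -
  have pt: "Q j 1 \<beta> u v - u  *  (\<Sum>k=0..j. cf j 1 \<beta> k * (real(j-k) * u^k * v^(j-k-1) - real k * u^(k-1) * v^(j-k)))
     = (\<Sum>k<Suc j. cf j 1 \<beta> k * real(Suc k) * u^k * v^(j-k)) - (\<Sum>k<Suc j. cf j 1 \<beta> k  *  real(j-k) * u^(Suc k) * v^(j-k-1))"
    unfolding Q_def sum_distrib_left atLeast0AtMost lessThan_Suc_atMost sum_subtractf[symmetric]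
  proof (rule sum.cong[OF refl])
    fix k
    show "cf j 1 \<beta> k  *  u ^ k  *  v ^ (j - k) - u  *  (cf j 1 \<beta> k  *  (real (j - k)  *  u ^ k  *  v ^ (j - k - 1) - real k  *  u ^ (k - 1)  *  v ^ (j - k)))
      = cf j 1 \<beta> k  *  real (Suc k)  *  u ^ k  *  v ^ (j - k) - cf j 1 \<beta> k  *  real (j - k)  *  u ^ Suc k  *  v ^ (j - k - 1)"
      by (cases k) (simp_all add: algebra_simps)
  qed
  have s1: "(\<Sum>k<Suc j. cf j 1 \<beta> k * real(Suc k) * u^k * v^(j-k)) = cf j 1 \<beta> 0  *  v^j + (\<Sum>i<j. cf j 1 \<beta> (Suc i) * real(Suc i + 1) * u^(Suc i) * v^(j - Suc i))"
    by (subst sum.lessThan_Suc_shift) simp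
  have s2: "(\<Sum>k<Suc j. cf j 1 \<beta> k  *  real(j-k) * u^(Suc k) * v^(j-k-1)) = (\<Sum>i<j. cf j 1 \<beta> i  *  real(j-i) * u^(Suc i) * v^(j - Suc i))"
    by (simp add: sum.lessThan_Suc)
  have s3: "(real j + 1)  *  Q j 0 \<beta> u v = (real j + 1)  *  cf j 0 \<beta> 0  *  v^j + (\<Sum>i<j. (real j + 1)  *  cf j 0 \<beta> (Suc i) * u^(Suc i) * v^(j - Suc i))"
    unfolding Q_def atLeast0AtMost lessThan_Suc_atMost[symmetric]
    by (subst sum.lessThan_Suc_shift) (simp add: sum_distrib_left algebra_simps)
  have s4: "(\<Sum>i<j. cf j 1 \<beta> (Suc i) * real(Suc i + 1) * u^(Suc i) * v^(j - Suc i)) - (\<Sum>i<j. cf j 1 \<beta> i  *  real(j-i) * u^(Suc i) * v^(j - Suc i))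
     = (\<Sum>i<j. (real j + 1)  *  cf j 0 \<beta> (Suc i) * u^(Suc i) * v^(j - Suc i))"
    unfolding sum_subtractf[symmetric]
  proof (rule sum.cong[OF refl])
    fix i assume "i \<in> {..<j}"
    then have "real (Suc i + 1)  *  cf j 1 \<beta> (Suc i) - real (j - i)  *  cf j 1 \<beta> i = (real j + 1)  *  cf j 0 \<beta> (Suc i)"
      by (intro coefB) simp
    then show "cf j 1 \<beta> (Suc i) * real(Suc i + 1) * u^(Suc i) * v^(j - Suc i) - cf j 1 \<beta> i  *  real(j-i) * u^(Suc i) * v^(j - Suc i)
       = (real j + 1)  *  cf j 0 \<beta> (Suc i) * u^(Suc i) * v^(j - Suc i)"
      by (metis (no_types, lifting) left_diff_distrib mult.commute mult.left_commute)
  qed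
  show ?thesis unfolding pt s1 s2 s3 using s4 coefB0[of j \<beta>] by (simp add: algebra_simps)
qed


lemma LD: "Q j 0 \<beta> u v + 2 * v * (\<Sum>k=0..j. cf j 0 \<beta> k * (real (j - k) * u ^ k * v ^ (j - k - 1) - real k * u ^ (k - 1) * v ^ (j - k)))
   = (2 * (real j + \<beta> + 1) + 2 * real j + 1) * Q j 0 \<beta> u v - 2 * (real j + \<beta> + 1) * Q j 1 \<beta> u v"
proof -
  define C where "C = 2 * (real j + \<beta> + 1) + 2 * real j + 1"
  define D where "D = 2 * (real j + \<beta> + 1)"
  have pt: "Q j 0 \<beta> u v + 2 * v * (\<Sum>k=0..j. cf j 0 \<beta> k * (real (j - k) * u ^ k * v ^ (j - k - 1) - real k * u ^ (k - 1) * v ^ (j - k)))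
     = (\<Sum>k<Suc j. cf j 0 \<beta> k * (1 + 2 * real (j - k)) * u ^ k * v ^ (j - k)) - 2 * (\<Sum>k<Suc j. cf j 0 \<beta> k * real k * u ^ (k - 1) * v ^ Suc (j - k))"
    unfolding Q_def sum_distrib_left atLeast0AtMost lessThan_Suc_atMost sum_subtractf[symmetric] sum.distrib[symmetric]
  proof (rule sum.cong[OF refl])
    fix k
    show "cf j 0 \<beta> k * u ^ k * v ^ (j - k) + 2 * v * (cf j 0 \<beta> k * (real (j - k) * u ^ k * v ^ (j - k - 1) - real k * u ^ (k - 1) * v ^ (j - k)))
       = cf j 0 \<beta> k * (1 + 2 * real (j - k)) * u ^ k * v ^ (j - k) - 2 * (cf j 0 \<beta> k * real k * u ^ (k - 1) * v ^ Suc (j - k))"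
    proof (cases "k < j")
      case True
      then have "v * v ^ (j - k - 1) = v ^ (j - k)" by (metis Suc_diff_Suc diff_Suc_1 power_Suc zero_less_diff) 
      then show ?thesis by (simp add: algebra_simps)
    next
      case False
      then show ?thesis by (simp add: algebra_simps)
    qed
  qed
  have s1: "(\<Sum>k<Suc j. cf j 0 \<beta> k * (1 + 2 * real (j - k)) * u ^ k * v ^ (j - k))
     = (\<Sum>k<j. cf j 0 \<beta> k * (1 + 2 * real (j - k)) * u ^ k * v ^ (j - k)) + cf j 0 \<beta> j * u ^ j"
    by simp
  have s2: "(\<Sum>k<Suc j. cf j 0 \<beta> k * real k * u ^ (k - 1) * v ^ Suc (j - k))
     = (\<Sum>i<j. cf j 0 \<beta> (Suc i) * (real i + 1) * u ^ i * v ^ (j - i))"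
    by (subst sum.lessThan_Suc_shift) (auto intro!: sum.cong simp: Suc_diff_Suc algebra_simps)
  have s3: "C * Q j 0 \<beta> u v - D * Q j 1 \<beta> u v
     = (\<Sum>k<j. (C * cf j 0 \<beta> k - D * cf j 1 \<beta> k) * u ^ k * v ^ (j - k)) + (C * cf j 0 \<beta> j - D * cf j 1 \<beta> j) * u ^ j"
    unfolding Q_def atLeast0AtMost lessThan_Suc_atMost[symmetric]
    by (simp add: sum_distrib_left sum_subtractf[symmetric] algebra_simps)
  have s4: "(\<Sum>k<j. cf j 0 \<beta> k * (1 + 2 * real (j - k)) * u ^ k * v ^ (j - k)) - 2 * (\<Sum>i<j. cf j 0 \<beta> (Suc i) * (real i + 1) * u ^ i * v ^ (j - i))
     = (\<Sum>k<j. (C * cf j 0 \<beta> k - D * cf j 1 \<beta> k) * u ^ k * v ^ (j - k))"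
    unfolding sum_distrib_left sum_subtractf[symmetric]
  proof (rule sum.cong[OF refl])
    fix k assume "k \<in> {..<j}"
    then have kj: "k < j" by simp
    have "cf j 0 \<beta> k + 2 * (real j - real k) * cf j 0 \<beta> k - 2 * (real k + 1) * cf j 0 \<beta> (Suc k) = C * cf j 0 \<beta> k - D * cf j 1 \<beta> k"
      unfolding C_def D_def using coefD[OF kj] .
    moreover have "real (j - k) = real j - real k" using kj by simp
    ultimately show "cf j 0 \<beta> k * (1 + 2 * real (j - k)) * u ^ k * v ^ (j - k) - 2 * (cf j 0 \<beta> (Suc k) * (real k + 1) * u ^ k * v ^ (j - k))
       = (C * cf j 0 \<beta> k - D * cf j 1 \<beta> k) * u ^ k * v ^ (j - k)"
    proof -
      assume E: "cf j 0 \<beta> k + 2 * (real j - real k) * cf j 0 \<beta> k - 2 * (real k + 1) * cf j 0 \<beta> (Suc k) = C * cf j 0 \<beta> k - D * cf j 1 \<beta> k"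
        and R: "real (j - k) = real j - real k"
      have "cf j 0 \<beta> k * (1 + 2 * real (j - k)) * u ^ k * v ^ (j - k) - 2 * (cf j 0 \<beta> (Suc k) * (real k + 1) * u ^ k * v ^ (j - k))
        = (cf j 0 \<beta> k + 2 * (real j - real k) * cf j 0 \<beta> k - 2 * (real k + 1) * cf j 0 \<beta> (Suc k)) * (u ^ k * v ^ (j - k))"
        unfolding R by (simp add: algebra_simps)
      then show ?thesis unfolding E by simp
    qed
  qed
  have s5: "cf j 0 \<beta> j = C * cf j 0 \<beta> j - D * cf j 1 \<beta> j"
    unfolding C_def D_def by (rule coefDj)
  have "Q j 0 \<beta> u v + 2 * v * (\<Sum>k=0..j. cf j 0 \<beta> k * (real (j - k) * u ^ k * v ^ (j - k - 1) - real k * u ^ (k - 1) * v ^ (j - k)))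
     = C * Q j 0 \<beta> u v - D * Q j 1 \<beta> u v"
  proof -
    have s6: "cf j 0 \<beta> j * u ^ j = (C * cf j 0 \<beta> j - D * cf j 1 \<beta> j) * u ^ j"
      using s5 by simp
    show ?thesis unfolding pt s1 s2 s3 using s4 s6 by linarith
  qed
  then show ?thesis unfolding C_def D_def .
qed


lemma alg1: "(q1::real) - (a - s^2) * S = c * q0 \<Longrightarrow> 2 * s * q1 + 2 * s * S * (s^2 - a) = 2 * c * (s * q0)"
proof -
  assume h: "q1 - (a - s^2) * S = c * q0"
  have "2 * s * q1 + 2 * s * S * (s^2 - a) = 2 * s * (q1 - (a - s^2) * S)" by (simp add: algebra_simps)
  also have "\<dots> = 2 * c * (s * q0)" unfolding h by simp
  finally show ?thesis .
qed

lemma alg2: "(q0::real) + 2 * t^2 * S = r \<Longrightarrow> c * (1 * q0 + 2 * t * S * t) = c * r"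
proof -
  assume h: "q0 + 2 * t^2 * S = r"
  have "1 * q0 + 2 * t * S * t = q0 + 2 * t^2 * S" by (simp add: power2_eq_square)
  then show ?thesis using h by simp
qed

lemma alg3: "2 * (real j + 1) * ((2 * (real j + b + 1) + 2 * real j + 1) * (T * p0) - 2 * (real j + b + 1) * (T * p1))
  = 2 * (real j + 1) * (4 * real j + 2 * b + 3) * T * p0 - 4 * (real j + 1) * (real j + b + 1) * T * p1"
  by (simp add: algebra_simps)

theorem lemma2p4:
  fixes j :: nat and \<beta> t :: real and x :: "'a::euclidean_space"
  assumes "t \<noteq> 0"
  shows "((\<lambda>s. H j \<beta> x s) has_real_derivative
            (2 * (real j + 1) * t^(2*j+1) * jacobiP j 0 \<beta> (2 * (norm x)^2 / t^2 - 1))) (at t) \<and>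
         (deriv (\<lambda>s. H j \<beta> x s) has_real_derivative
            (2 * (real j + 1) * (4 * real j + 2 * \<beta> + 3) * t^(2*j)
               * jacobiP j 0 \<beta> (2 * (norm x)^2 / t^2 - 1)
             - 4 * (real j + 1) * (real j + \<beta> + 1) * t^(2*j)
               * jacobiP j 1 \<beta> (2 * (norm x)^2 / t^2 - 1))) (at t)"
proof -
  define a where "a = (norm x)^2"
  define G1 where "G1 = (\<lambda>s. (s^2 - a) * Q j 1 \<beta> (a - s^2) (s^2))"
  define G2 where "G2 = (\<lambda>s. 2 * (real j + 1) * (s * Q j 0 \<beta> (a - s^2) (s^2)))"
  have HG: "G1 s = H j \<beta> x s" if "s \<noteq> 0" for s
  proof -
    have "H j \<beta> x s = (s^2 - a) * (s^(2*j) * jacobiP j 1 \<beta> (2*a/s^2 - 1))"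
      unfolding H_def a_def by (simp add: mult.assoc)
    then show ?thesis unfolding G1_def using jacobi_Q[OF that] by simp
  qed
  have D1: "(G1 has_real_derivative 2 * (real j + 1) * (s * Q j 0 \<beta> (a - s^2) (s^2))) (at s)" for s
  proof -
    have d: "((\<lambda>s. s^2 - a) has_real_derivative 2 * s) (at s)"
      by (rule derivative_eq_intros refl | simp)+
    show ?thesis unfolding G1_def
      apply (rule DERIV_cong[OF DERIV_mult[OF d DQ]])
      by (rule alg1[OF LB])
  qed
  have D2: "(G2 has_real_derivative 2 * (real j + 1) * ((2 * (real j + \<beta> + 1) + 2 * real j + 1) * Q j 0 \<beta> (a - t^2) (t^2) - 2 * (real j + \<beta> + 1) * Q j 1 \<beta> (a - t^2) (t^2))) (at t)"
    unfolding G2_def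
    apply (rule DERIV_cong[OF DERIV_cmult[OF DERIV_mult[OF DERIV_ident DQ]]])
    by (rule alg2[OF LD])
  have op: "open (-{0::real})" by (simp add: open_Compl)
  have dH: "((\<lambda>s. H j \<beta> x s) has_real_derivative 2 * (real j + 1) * (s * Q j 0 \<beta> (a - s^2) (s^2))) (at s)" if "s \<noteq> 0" for s
    by (rule has_field_derivative_transform_within_open[OF D1 op]) (use that HG in auto)
  have P0: "t^(2*j) * jacobiP j 0 \<beta> (2 * (norm x)^2 / t^2 - 1) = Q j 0 \<beta> (a - t^2) (t^2)"
    unfolding a_def by (rule jacobi_Q[OF assms])
  have P1: "t^(2*j) * jacobiP j 1 \<beta> (2 * (norm x)^2 / t^2 - 1) = Q j 1 \<beta> (a - t^2) (t^2)"
    unfolding a_def by (rule jacobi_Q[OF assms])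
  have part1: "((\<lambda>s. H j \<beta> x s) has_real_derivative
            (2 * (real j + 1) * t^(2*j+1) * jacobiP j 0 \<beta> (2 * (norm x)^2 / t^2 - 1))) (at t)"
    apply (rule DERIV_cong[OF dH[OF assms]])
    using P0 by (simp add: algebra_simps)
  have dd: "G2 s = deriv (\<lambda>s. H j \<beta> x s) s" if "s \<in> -{0}" for s
    using DERIV_imp_deriv[OF dH] that unfolding G2_def by simp
  have part2: "(deriv (\<lambda>s. H j \<beta> x s) has_real_derivative
            (2 * (real j + 1) * (4 * real j + 2 * \<beta> + 3) * t^(2*j)
               * jacobiP j 0 \<beta> (2 * (norm x)^2 / t^2 - 1)
             - 4 * (real j + 1) * (real j + \<beta> + 1) * t^(2*j)
               * jacobiP j 1 \<beta> (2 * (norm x)^2 / t^2 - 1))) (at t)"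
    apply (rule DERIV_cong[OF has_field_derivative_transform_within_open[OF D2 op _ dd]])
    using assms apply simp
    apply simp
    apply (unfold P0[symmetric] P1[symmetric])
    by (rule alg3)
  show ?thesis using part1 part2 by blast
qed

end
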